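(* Let $\pi$ be a permutation-invariant probability density on $\mathbb{X}^n$ and $q$ a probability density on $\mathbb{X}$. For every $x\in\mathbb{X}^n$, $y\in\mathbb{X}$ and $i\in\{1,\dots,n\}$, $$\alpha_i^{\mathrm{IMwG}}(y,x)=\min\Big\{1,\frac{w_i(y,x)}{w_0(y,x)}\Big\}\le \alpha_i^{\mathrm{SOMA}}(y,x).$$
   Context: Permutation invariance: $\pi(x_{\sigma(1)},\dots,x_{\sigma(n)})=\pi(x)$ for all permutations $\sigma$. $[x_{-i},y]$ is $x$ with its $i$-th component replaced by $y$. Weights: $w_i(y,x)=\pi([x_{-i},y])/\big(q(y)\prod_{j\ne i}q(x_j)\big)$ for $1\le i\le n$, $w_0(y,x)=\pi(x)/\prod_{j=1}^n q(x_j)$, $W(y,x)=\sum_{i=1}^n w_i(y,x)$ (assumed well-defined and positive). The independent-Metropolis-within-Gibbs acceptance probability for replacing $x_i$ by $y$ is $\alpha_i^{\mathrm{IMwG}}(y,x)=\min\{1,\pi([x_{-i},y])q(x_i)/(\pi(x)q(y))\}$. The SOMA acceptance probability is $\alpha_i^{\mathrm{SOMA}}(y,x)=\min\{1,W(y,x)/(W(y,x)+w_0(y,x)-w_i(y,x))\}$. *)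

theory Defs
  imports "HOL-Analysis.Analysis"
begin

text \<open>Points of X^n are functions x :: nat => 'a, meaningful on the index set {1..n}.
  [x_{-i}, y] is the update x(i := y).\<close>

definition perm_invariant :: "nat \<Rightarrow> ((nat \<Rightarrow> 'a) \<Rightarrow> real) \<Rightarrow> 'a set \<Rightarrow> bool" where
  "perm_invariant n \<pi> X \<longleftrightarrow>
     (\<forall>\<sigma> x. \<sigma> permutes {1..n} \<longrightarrow> x \<in> PiE {1..n} (\<lambda>_. X) \<longrightarrow> \<pi> (x \<circ> \<sigma>) = \<pi> x)"

definition w_i :: "nat \<Rightarrow> ((nat \<Rightarrow> 'a) \<Rightarrow> real) \<Rightarrow> ('a \<Rightarrow> real) \<Rightarrow> nat \<Rightarrow> 'a \<Rightarrow> (nat \<Rightarrow> 'a) \<Rightarrow> real" where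
  "w_i n \<pi> q i y x = \<pi> (x(i := y)) / (q y * (\<Prod>j\<in>{1..n} - {i}. q (x j)))"

definition w_0 :: "nat \<Rightarrow> ((nat \<Rightarrow> 'a) \<Rightarrow> real) \<Rightarrow> ('a \<Rightarrow> real) \<Rightarrow> 'a \<Rightarrow> (nat \<Rightarrow> 'a) \<Rightarrow> real" where
  "w_0 n \<pi> q y x = \<pi> x / (\<Prod>j\<in>{1..n}. q (x j))"

definition W_sum :: "nat \<Rightarrow> ((nat \<Rightarrow> 'a) \<Rightarrow> real) \<Rightarrow> ('a \<Rightarrow> real) \<Rightarrow> 'a \<Rightarrow> (nat \<Rightarrow> 'a) \<Rightarrow> real" where
  "W_sum n \<pi> q y x = (\<Sum>i\<in>{1..n}. w_i n \<pi> q i y x)"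

definition alpha_IMwG :: "((nat \<Rightarrow> 'a) \<Rightarrow> real) \<Rightarrow> ('a \<Rightarrow> real) \<Rightarrow> nat \<Rightarrow> 'a \<Rightarrow> (nat \<Rightarrow> 'a) \<Rightarrow> real" where
  "alpha_IMwG \<pi> q i y x = min 1 ((\<pi> (x(i := y)) * q (x i)) / (\<pi> x * q y))"

definition alpha_SOMA :: "nat \<Rightarrow> ((nat \<Rightarrow> 'a) \<Rightarrow> real) \<Rightarrow> ('a \<Rightarrow> real) \<Rightarrow> nat \<Rightarrow> 'a \<Rightarrow> (nat \<Rightarrow> 'a) \<Rightarrow> real" where
  "alpha_SOMA n \<pi> q i y x =
     min 1 (W_sum n \<pi> q y x / (W_sum n \<pi> q y x + w_0 n \<pi> q y x - w_i n \<pi> q i y x))"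

end

theory Submission
  imports Defs
begin

lemma key_ineq:
  fixes a b S :: real
  assumes "a \<ge> 0" "b \<ge> 0" "S \<ge> a" "S > 0"
  shows "min 1 (a / b) \<le> min 1 (S / (S + b - a))"
proof (cases "b = 0")
  case True
  then show ?thesis using assms by (simp add: min_def)
next
  case False
  hence bp: "b > 0" using assms by simp
  have dp: "S + b - a > 0" using assms bp by simp
  show ?thesis
  proof (cases "a \<ge> b")
    case True
    hence "S / (S + b - a) \<ge> 1" using dp by (simp add: field_simps)
    thus ?thesis by simp
  next
    case False
    have "(a - b) * (S - a) \<le> 0" using False assms by (simp add: mult_nonpos_nonneg)
    hence "a / b \<le> S / (S + b - a)" using bp dp
      by (simp add: divide_simps) (simp add: algebra_simps)
    thus ?thesis by simp
  qed
qed

theorem theorem2: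
  fixes M :: "'a measure" and n :: nat
    and \<pi> :: "(nat \<Rightarrow> 'a) \<Rightarrow> real" and q :: "'a \<Rightarrow> real"
    and x :: "nat \<Rightarrow> 'a" and y :: 'a and i :: nat
  assumes pi_meas: "\<pi> \<in> borel_measurable (PiM {1..n} (\<lambda>_. M))"
    and pi_nonneg: "\<And>z. \<pi> z \<ge> 0"
    and pi_int: "(\<integral>\<^sup>+ z. ennreal (\<pi> z) \<partial>(PiM {1..n} (\<lambda>_. M))) = 1"
    and pi_sym: "perm_invariant n \<pi> (space M)"
    and q_meas: "q \<in> borel_measurable M"
    and q_nonneg: "\<And>z. q z \<ge> 0"
    and q_int: "(\<integral>\<^sup>+ z. ennreal (q z) \<partial>M) = 1"
    and x_in: "x \<in> space (PiM {1..n} (\<lambda>_. M))"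
    and y_in: "y \<in> space M"
    and i_in: "i \<in> {1..n}"
    and q_y_pos: "q y > 0"
    and q_x_pos: "\<And>j. j \<in> {1..n} \<Longrightarrow> q (x j) > 0"
    and W_pos: "W_sum n \<pi> q y x > 0"
  shows "alpha_IMwG \<pi> q i y x = min 1 (w_i n \<pi> q i y x / w_0 n \<pi> q y x)
         \<and> alpha_IMwG \<pi> q i y x \<le> alpha_SOMA n \<pi> q i y x"
proof -
  define Pi where "Pi = (\<Prod>j\<in>{1..n} - {i}. q (x j))"
  have Pip: "Pi > 0" unfolding Pi_def by (rule prod_pos) (use q_x_pos in auto)
  have P: "(\<Prod>j\<in>{1..n}. q (x j)) = q (x i) * Pi"
    unfolding Pi_def using i_in by (simp add: prod.remove)
  have qi: "q (x i) > 0" using q_x_pos i_in .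
  have eq: "alpha_IMwG \<pi> q i y x = min 1 (w_i n \<pi> q i y x / w_0 n \<pi> q y x)"
    unfolding alpha_IMwG_def w_i_def w_0_def P Pi_def[symmetric]
    using Pip qi q_y_pos by (simp add: field_simps)
  have wnn: "w_i n \<pi> q j y x \<ge> 0" if "j \<in> {1..n}" for j
    unfolding w_i_def
    by (intro divide_nonneg_pos pi_nonneg mult_pos_pos q_y_pos prod_pos)
       (use q_x_pos in auto)
  have w0nn: "w_0 n \<pi> q y x \<ge> 0" unfolding w_0_def P using Pip qi pi_nonneg by simp
  have Sge: "W_sum n \<pi> q y x \<ge> w_i n \<pi> q i y x"
    unfolding W_sum_def using i_in wnn
    by (intro member_le_sum) auto
  have "min 1 (w_i n \<pi> q i y x / w_0 n \<pi> q y x) \<le> alpha_SOMA n \<pi> q i y x"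
    unfolding alpha_SOMA_def
    by (rule key_ineq) (use wnn i_in w0nn Sge W_pos in auto)
  with eq show ?thesis by simp
qed

end
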